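(* Let $f,g$ be elements both lying in $A$, or both lying in $B$, such that $f\notin HgH$. Then there exists an integer $t_0>1$ such that for every positive integer $t$ divisible by $t_0$, $f\rho_t\notin H(t)\,(g\rho_t)\,H(t)$.
   Context: Fix integers $m,n>1$ and let $G_{mn}=\langle a,b;\ [a^m,b^n]=1\rangle$. Put $c=a^m$, $d=b^n$, $H=\langle c,d\rangle$, $A=\langle a,H\rangle$, $B=\langle b,H\rangle$. For an integer $t>1$ let $G_{mn}(t)=\langle a,b;\ [a^m,b^n]=1,\ a^{mt}=b^{nt}=1\rangle$, $\rho_t:G_{mn}\to G_{mn}(t)$ the natural homomorphism, and $H(t)=H\rho_t$. *)

theory Defs
  imports "HOL-Algebra.Coset" "HOL-Algebra.Generated_Groups"
begin

datatype gen = Ga | Gb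

text \<open>A letter is a generator together with an exponent sign (True = inverse).
  Words are lists of letters.\<close>
type_synonym letter = "gen \<times> bool"
type_synonym word = "letter list"

fun linv :: "letter \<Rightarrow> letter" where
  "linv (x, e) = (x, \<not> e)"

definition winv :: "word \<Rightarrow> word" where
  "winv w = rev (map linv w)"

definition wpow :: "gen \<Rightarrow> int \<Rightarrow> word" where
  "wpow x k = (if 0 \<le> k then replicate (nat k) (x, False) else replicate (nat (- k)) (x, True))"

inductive pres_eq :: "word set \<Rightarrow> word \<Rightarrow> word \<Rightarrow> bool" for R :: "word set" where
  refl: "pres_eq R u u"
| sym: "pres_eq R u v \<Longrightarrow> pres_eq R v u"
| trans: "pres_eq R u v \<Longrightarrow> pres_eq R v w \<Longrightarrow> pres_eq R u w"
| cancel: "pres_eq R (u @ [l, linv l] @ v) (u @ v)"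
| relator: "r \<in> R \<Longrightarrow> pres_eq R (u @ r @ v) (u @ v)"

definition pres_rel :: "word set \<Rightarrow> (word \<times> word) set" where
  "pres_rel R = {(u, v). pres_eq R u v}"

definition word_class :: "word set \<Rightarrow> word \<Rightarrow> word set" where
  "word_class R w = pres_rel R `` {w}"

definition presented_group :: "word set \<Rightarrow> word set monoid" where
  "presented_group R =
     \<lparr>carrier = UNIV // pres_rel R,
      mult = (\<lambda>X Y. word_class R ((SOME u. u \<in> X) @ (SOME v. v \<in> Y))),
      one = word_class R []\<rparr>"

definition comm_rel :: "nat \<Rightarrow> nat \<Rightarrow> word" where
  "comm_rel m n = wpow Ga (- int m) @ wpow Gb (- int n) @ wpow Ga (int m) @ wpow Gb (int n)"

definition Gmn :: "nat \<Rightarrow> nat \<Rightarrow> word set monoid" where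
  "Gmn m n = presented_group {comm_rel m n}"

definition Gmnt :: "nat \<Rightarrow> nat \<Rightarrow> nat \<Rightarrow> word set monoid" where
  "Gmnt m n t = presented_group {comm_rel m n, wpow Ga (int (m * t)), wpow Gb (int (n * t))}"

definition a_el :: "nat \<Rightarrow> nat \<Rightarrow> word set" where
  "a_el m n = word_class {comm_rel m n} [(Ga, False)]"

definition b_el :: "nat \<Rightarrow> nat \<Rightarrow> word set" where
  "b_el m n = word_class {comm_rel m n} [(Gb, False)]"

definition c_el :: "nat \<Rightarrow> nat \<Rightarrow> word set" where
  "c_el m n = a_el m n [^]\<^bsub>Gmn m n\<^esub> m"

definition d_el :: "nat \<Rightarrow> nat \<Rightarrow> word set" where
  "d_el m n = b_el m n [^]\<^bsub>Gmn m n\<^esub> n"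

definition Hsub :: "nat \<Rightarrow> nat \<Rightarrow> word set set" where
  "Hsub m n = generate (Gmn m n) {c_el m n, d_el m n}"

definition Asub :: "nat \<Rightarrow> nat \<Rightarrow> word set set" where
  "Asub m n = generate (Gmn m n) (insert (a_el m n) (Hsub m n))"

definition Bsub :: "nat \<Rightarrow> nat \<Rightarrow> word set set" where
  "Bsub m n = generate (Gmn m n) (insert (b_el m n) (Hsub m n))"

definition rho :: "nat \<Rightarrow> nat \<Rightarrow> nat \<Rightarrow> word set \<Rightarrow> word set" where
  "rho m n t X = word_class {comm_rel m n, wpow Ga (int (m * t)), wpow Gb (int (n * t))} (SOME w. w \<in> X)"

definition Ht :: "nat \<Rightarrow> nat \<Rightarrow> nat \<Rightarrow> word set set" where
  "Ht m n t = rho m n t ` Hsub m n"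

end

theory Submission
  imports Defs
begin


lemma pres_eq_ctx: "pres_eq R u v \<Longrightarrow> pres_eq R (p @ u @ q) (p @ v @ q)"
proof (induction rule: pres_eq.induct)
  case (refl u) then show ?case by (rule pres_eq.refl)
next
  case (sym u v) show ?case by (rule pres_eq.sym[OF sym.IH])
next
  case (trans u v w) then show ?case by (metis pres_eq.trans)
next
  case (cancel u l v) show ?case using pres_eq.cancel[of R "p @ u" l "v @ q"] by simp
next
  case (relator r u v) then show ?case using pres_eq.relator[of r R "p @ u" "v @ q"] by simp
qed

lemma pres_eq_app: "pres_eq R u u' \<Longrightarrow> pres_eq R v v' \<Longrightarrow> pres_eq R (u @ v) (u' @ v')"
  using pres_eq_ctx[of R u u' "[]" v] pres_eq_ctx[of R v v' u' "[]"]
  by (metis append.right_neutral append_Nil pres_eq.trans)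

lemma pres_eq_mono: "pres_eq R u v \<Longrightarrow> R \<subseteq> R' \<Longrightarrow> pres_eq R' u v"
proof (induction rule: pres_eq.induct)
  case (cancel u l v) show ?case by (rule pres_eq.cancel)
qed (auto intro: pres_eq.intros)

lemma equiv_pres: "equiv UNIV (pres_rel R)"
  unfolding equiv_def refl_on_def sym_def trans_def pres_rel_def
  by (auto intro: pres_eq.intros)

lemma class_eq_iff: "word_class R u = word_class R v \<longleftrightarrow> pres_eq R u v"
  unfolding word_class_def using eq_equiv_class_iff[OF equiv_pres, of u v R]
  by (simp add: pres_rel_def)

lemma mem_class: "v \<in> word_class R u \<longleftrightarrow> pres_eq R u v"
  unfolding word_class_def pres_rel_def by simp

lemma carrier_pg: "carrier (presented_group R) = range (word_class R)"
  unfolding presented_group_def quotient_def word_class_def by auto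

lemma some_in_class: "(SOME w. w \<in> word_class R u) \<in> word_class R u"
  by (rule someI[of _ u]) (simp add: mem_class pres_eq.refl)

lemma rep_class: "w \<in> word_class R u \<Longrightarrow> word_class R w = word_class R u"
  by (simp add: class_eq_iff mem_class pres_eq.sym)

lemma mult_pg: "word_class R u \<otimes>\<^bsub>presented_group R\<^esub> word_class R v = word_class R (u @ v)"
proof -
  have 1: "pres_eq R u (SOME w. w \<in> word_class R u)" using some_in_class mem_class by fast
  have 2: "pres_eq R v (SOME w. w \<in> word_class R v)" using some_in_class mem_class by fast
  show ?thesis unfolding presented_group_def
    using pres_eq_app[OF 1 2] by (simp add: class_eq_iff pres_eq.sym)
qed

lemma one_pg: "\<one>\<^bsub>presented_group R\<^esub> = word_class R []"
  by (simp add: presented_group_def)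

lemma winv_cancel: "pres_eq R (winv w @ w) []"
proof (induction w)
  case Nil then show ?case by (simp add: winv_def pres_eq.refl)
next
  case (Cons l w)
  obtain x e where l: "l = (x, e)" by (cases l)
  have "winv (l # w) @ l # w = winv w @ [linv l, l] @ w" by (simp add: winv_def)
  moreover have "pres_eq R (winv w @ [linv l, l] @ w) (winv w @ w)"
    using pres_eq.cancel[of R "winv w" "linv l" w] l by simp
  ultimately show ?case using Cons pres_eq.trans by metis
qed

lemma group_pg: "group (presented_group R)"
proof (rule groupI)
  fix x y assume "x \<in> carrier (presented_group R)" "y \<in> carrier (presented_group R)"
  then show "x \<otimes>\<^bsub>presented_group R\<^esub> y \<in> carrier (presented_group R)"
    by (auto simp: carrier_pg mult_pg)
next
  show "\<one>\<^bsub>presented_group R\<^esub> \<in> carrier (presented_group R)" by (simp add: carrier_pg one_pg)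
next
  fix x y z assume "x \<in> carrier (presented_group R)" "y \<in> carrier (presented_group R)"
    "z \<in> carrier (presented_group R)"
  then show "x \<otimes>\<^bsub>presented_group R\<^esub> y \<otimes>\<^bsub>presented_group R\<^esub> z =
      x \<otimes>\<^bsub>presented_group R\<^esub> (y \<otimes>\<^bsub>presented_group R\<^esub> z)"
    by (auto simp: carrier_pg mult_pg)
next
  fix x assume "x \<in> carrier (presented_group R)"
  then show "\<one>\<^bsub>presented_group R\<^esub> \<otimes>\<^bsub>presented_group R\<^esub> x = x"
    by (auto simp: carrier_pg mult_pg one_pg)
next
  fix x assume "x \<in> carrier (presented_group R)"
  then obtain w where x: "x = word_class R w" by (auto simp: carrier_pg)
  show "\<exists>y\<in>carrier (presented_group R). y \<otimes>\<^bsub>presented_group R\<^esub> x = \<one>\<^bsub>presented_group R\<^esub>"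
    by (rule bexI[of _ "word_class R (winv w)"])
       (auto simp: x mult_pg one_pg class_eq_iff winv_cancel carrier_pg)
qed

lemma inv_pg: "inv\<^bsub>presented_group R\<^esub> (word_class R w) = word_class R (winv w)"
  using group.inv_equality[OF group_pg, of R "word_class R (winv w)" "word_class R w"]
  by (auto simp: mult_pg one_pg class_eq_iff winv_cancel carrier_pg)

lemma pow_pg: "word_class R w [^]\<^bsub>presented_group R\<^esub> (k::nat) = word_class R (concat (replicate k w))"
proof (induction k)
  case 0 then show ?case by (simp add: one_pg)
next
  case (Suc k)
  have "concat (replicate k w) @ w = concat (replicate (Suc k) w)"
    by (simp add: replicate_append_same[symmetric])
  then show ?case using Suc by (simp add: mult_pg)
qed



fun vldP :: "nat \<Rightarrow> (int \<Rightarrow> bool) \<Rightarrow> (bool \<times> int) list \<Rightarrow> bool" where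
  "vldP m P [] = True"
| "vldP m P [(b, e)] = (b \<and> 1 \<le> e \<and> e < int m)"
| "vldP m P ((b, e) # (b', e') # r) =
     (b \<noteq> b' \<and> (if b then 1 \<le> e \<and> e < int m else P e) \<and> vldP m P ((b', e') # r))"

lemma vldP_tl: "vldP m P (x # r) \<Longrightarrow> vldP m P r"
  by (cases x; cases r) auto

lemma vldP_cons_a: "vldP m P ((True, i) # r) \<longleftrightarrow> 1 \<le> i \<and> i < int m \<and> vldP m P r \<and> (r = [] \<or> \<not> fst (hd r))"
  by (cases r) auto

lemma vldP_cons_d: "vldP m P ((False, j) # r) \<longleftrightarrow> P j \<and> vldP m P r \<and> r \<noteq> [] \<and> fst (hd r)"
  by (cases r) auto

fun wh :: "('a, 'b) monoid_scheme \<Rightarrow> 'a \<Rightarrow> 'a \<Rightarrow> (bool \<times> int) list \<Rightarrow> 'a" where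
  "wh G a d [] = \<one>\<^bsub>G\<^esub>"
| "wh G a d ((b, e) # r) = (if b then a [^]\<^bsub>G\<^esub> e else d [^]\<^bsub>G\<^esub> e) \<otimes>\<^bsub>G\<^esub> wh G a d r"

lemma (in group) comm_inv: "x \<in> carrier G \<Longrightarrow> y \<in> carrier G \<Longrightarrow> x \<otimes> y = y \<otimes> x \<Longrightarrow> x \<otimes> inv y = inv y \<otimes> x"
proof -
  assume xy: "x \<in> carrier G" "y \<in> carrier G" "x \<otimes> y = y \<otimes> x"
  have 1: "inv y \<otimes> (y \<otimes> x) = x" using xy(1,2) by (simp add: m_assoc[symmetric])
  have h2a: "(x \<otimes> y) \<otimes> inv y = x" using xy(1,2) by (simp add: m_assoc)
  have "inv y \<otimes> (x \<otimes> y) \<otimes> inv y = inv y \<otimes> ((x \<otimes> y) \<otimes> inv y)" using xy by (intro m_assoc) auto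
  then have 2: "inv y \<otimes> (x \<otimes> y) \<otimes> inv y = inv y \<otimes> x" using h2a by simp
  have "x \<otimes> inv y = inv y \<otimes> (y \<otimes> x) \<otimes> inv y" using 1 by simp
  also have "\<dots> = inv y \<otimes> x" using 2 xy(3) by simp
  finally show ?thesis .
qed

lemma (in group) comm_mult: "z \<in> carrier G \<Longrightarrow> x \<in> carrier G \<Longrightarrow> y \<in> carrier G \<Longrightarrow>
  z \<otimes> x = x \<otimes> z \<Longrightarrow> z \<otimes> y = y \<otimes> z \<Longrightarrow> z \<otimes> (x \<otimes> y) = (x \<otimes> y) \<otimes> z"
proof -
  assume h: "z \<in> carrier G" "x \<in> carrier G" "y \<in> carrier G" "z \<otimes> x = x \<otimes> z" "z \<otimes> y = y \<otimes> z"
  have "z \<otimes> (x \<otimes> y) = (z \<otimes> x) \<otimes> y" using h(1-3) by (rule m_assoc[symmetric])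
  also have "\<dots> = (x \<otimes> z) \<otimes> y" using h(4) by simp
  also have "\<dots> = x \<otimes> (z \<otimes> y)" using h(1-3) by (intro m_assoc)
  also have "\<dots> = x \<otimes> (y \<otimes> z)" using h(5) by simp
  also have "\<dots> = (x \<otimes> y) \<otimes> z" using h(1-3) by (intro m_assoc[symmetric])
  finally show ?thesis .
qed

lemma (in group) comm_int_pow: "x \<in> carrier G \<Longrightarrow> y \<in> carrier G \<Longrightarrow> x \<otimes> y = y \<otimes> x \<Longrightarrow> x \<otimes> y [^] (e::int) = y [^] e \<otimes> x"
proof -
  assume xy: "x \<in> carrier G" "y \<in> carrier G" "x \<otimes> y = y \<otimes> x"
  have n: "x \<otimes> y [^] (k::nat) = y [^] k \<otimes> x" for k
    using group_commutes_pow[of y x k] xy by simp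
  show ?thesis
  proof (cases "e < 0")
    case True
    then have "y [^] e = inv (y [^] (nat (-e)))" unfolding int_pow_def2[of G y e] by simp
    then show ?thesis using comm_inv[OF xy(1) nat_pow_closed[OF xy(2)] n] by simp
  next
    case False
    then have "y [^] e = y [^] (nat e)" unfolding int_pow_def2[of G y e] by simp
    then show ?thesis using n by simp
  qed
qed

fun core :: "(bool \<times> int) list \<Rightarrow> (bool \<times> int) list" where
  "core ((False, j) # r) = r"
| "core u = u"

locale nf = group G for G (structure) +
  fixes a d :: 'a and m :: nat
  assumes a_c: "a \<in> carrier G" and d_c: "d \<in> carrier G" and m2: "m > 1"
    and cd: "a [^] m \<otimes> d = d \<otimes> a [^] m"
begin

abbreviation "c \<equiv> a [^] m"
abbreviation "H \<equiv> generate G {c, d}"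
abbreviation "A \<equiv> generate G (insert a H)"
abbreviation "W \<equiv> wh G a d"
abbreviation "vld \<equiv> vldP m (\<lambda>j. j \<noteq> 0)"

lemma c_c: "c \<in> carrier G" using a_c by simp

lemma H_sub: "subgroup H G" using generate_is_subgroup a_c d_c by auto

lemma H_car: "H \<subseteq> carrier G" using generate_incl a_c d_c by auto

lemma c_H: "c \<in> H" by (simp add: generate.incl)
lemma d_H: "d \<in> H" by (simp add: generate.incl)
lemma ci_H: "inv c \<in> H" by (simp add: generate.inv)
lemma di_H: "inv d \<in> H" by (simp add: generate.inv)

lemma W_c: "W u \<in> carrier G"
proof (induction u)
  case (Cons x r) then show ?case by (cases x) (auto simp: a_c d_c)
qed simp

lemma c_a_pow: "c \<otimes> a [^] (e::int) = a [^] e \<otimes> c"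
proof -
  have "c = a [^] (int m)" by (simp add: int_pow_int)
  then show ?thesis using int_pow_mult[OF a_c, of "int m" e] int_pow_mult[OF a_c, of e "int m"]
    by (simp add: add.commute)
qed

lemma c_W: "c \<otimes> W u = W u \<otimes> c"
proof (induction u)
  case Nil then show ?case using c_c by simp
next
  case (Cons x' r)
  obtain b e where be: "x' = (b, e)" by (cases x')
  have x: "(if b then a [^] e else d [^] e) \<in> carrier G" using a_c d_c by auto
  have "c \<otimes> (if b then a [^] e else d [^] e) = (if b then a [^] e else d [^] e) \<otimes> c"
    by (cases b) (simp_all only: if_True if_False c_a_pow comm_int_pow[OF c_c d_c cd])
  then show ?case using comm_mult[OF c_c x W_c[of r] _ Cons.IH] be by simp
qed

lemma ci_W: "inv c \<otimes> W u = W u \<otimes> inv c"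
  using comm_inv[OF W_c c_c c_W[symmetric]] by simp


lemma sub_nat_pow: "x \<in> H \<Longrightarrow> x [^] (k::nat) \<in> H"
  by (induction k) (auto intro: subgroup.m_closed[OF H_sub] subgroup.one_closed[OF H_sub])

lemma sub_int_pow: "x \<in> H \<Longrightarrow> x [^] (k::int) \<in> H"
proof (cases "k < 0")
  case True
  assume x: "x \<in> H"
  have "x [^] k = inv (x [^] (nat (-k)))" using True unfolding int_pow_def2[of G x k] by simp
  then show ?thesis using sub_nat_pow[OF x] subgroup.m_inv_closed[OF H_sub] by simp
next
  case False
  assume x: "x \<in> H"
  have "x [^] k = x [^] (nat k)" using False unfolding int_pow_def2[of G x k] by simp
  then show ?thesis using sub_nat_pow[OF x] by simp
qed

lemma a_pow_mult: "a [^] (i::int) \<otimes> a [^] j = a [^] (i + j)"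
  by (simp add: int_pow_mult[OF a_c])

lemma d_pow_mult: "d [^] (i::int) \<otimes> d [^] j = d [^] (i + j)"
  by (simp add: int_pow_mult[OF d_c])

lemma assoc3: "x \<in> carrier G \<Longrightarrow> y \<in> carrier G \<Longrightarrow> z \<in> carrier G \<Longrightarrow> x \<otimes> (y \<otimes> z) = (x \<otimes> y) \<otimes> z"
  by (simp add: m_assoc)

definition stepP :: "'a \<Rightarrow> bool" where
  "stepP x \<longleftrightarrow> x \<in> carrier G \<and> (\<forall>u. vld u \<longrightarrow> (\<exists>u' h. vld u' \<and> h \<in> H \<and> x \<otimes> W u = W u' \<otimes> h))"

lemma stepP_mult:
  assumes x: "stepP x" and y: "stepP y" shows "stepP (x \<otimes> y)"
  unfolding stepP_def
proof (intro conjI allI impI)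
  have x: "x \<in> carrier G \<and> (\<forall>u. vld u \<longrightarrow> (\<exists>u' h. vld u' \<and> h \<in> H \<and> x \<otimes> W u = W u' \<otimes> h))"
    and y: "y \<in> carrier G \<and> (\<forall>u. vld u \<longrightarrow> (\<exists>u' h. vld u' \<and> h \<in> H \<and> y \<otimes> W u = W u' \<otimes> h))"
    using x y by (auto simp: stepP_def)
  then show "x \<otimes> y \<in> carrier G" by auto
  fix u assume u: "vld u"
  obtain u1 h1 where 1: "vld u1" "h1 \<in> H" "y \<otimes> W u = W u1 \<otimes> h1" using y u by blast
  obtain u2 h2 where 2: "vld u2" "h2 \<in> H" "x \<otimes> W u1 = W u2 \<otimes> h2" using x 1(1) by blast
  have c: "h1 \<in> carrier G" "h2 \<in> carrier G" using 1 2 H_car by auto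
  have "x \<otimes> y \<otimes> W u = x \<otimes> (W u1 \<otimes> h1)" using x y 1(3) W_c by (simp add: m_assoc)
  also have "\<dots> = (x \<otimes> W u1) \<otimes> h1" using x W_c c by (simp add: m_assoc)
  also have "\<dots> = W u2 \<otimes> (h2 \<otimes> h1)" using 2(3) W_c c by (simp add: m_assoc)
  finally show "\<exists>u' h. vld u' \<and> h \<in> H \<and> x \<otimes> y \<otimes> W u = W u' \<otimes> h"
    using 2(1) subgroup.m_closed[OF H_sub 2(2) 1(2)] by blast
qed

lemma stepP_c: "stepP c"
  unfolding stepP_def using c_W c_H c_c by blast

lemma stepP_ci: "stepP (inv c)"
  unfolding stepP_def using ci_W ci_H c_c by blast

lemma stepP_one: "stepP \<one>"
  unfolding stepP_def using W_c subgroup.one_closed[OF H_sub] by force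

lemma stepP_dpow:
  assumes k: "k = 1 \<or> k = -1"
  shows "stepP (d [^] (k::int))"
  unfolding stepP_def
proof (intro conjI allI impI)
  show "d [^] k \<in> carrier G" using d_c by simp
  fix u assume u: "vld u"
  show "\<exists>u' h. vld u' \<and> h \<in> H \<and> d [^] k \<otimes> W u = W u' \<otimes> h"
  proof (cases u)
    case Nil
    then show ?thesis using sub_int_pow[OF d_H, of k] d_c
      by (intro exI[of _ "[]"] exI[of _ "d [^] k"]) simp
  next
    case (Cons x r)
    obtain b e where x: "x = (b, e)" by (cases x)
    show ?thesis
    proof (cases b)
      case True
      have "vld ((False, k) # u)" using u k Cons x True by auto
      moreover have "d [^] k \<otimes> W u = W ((False, k) # u) \<otimes> \<one>" using W_c d_c by simp
      ultimately show ?thesis using subgroup.one_closed[OF H_sub] by blast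
    next
      case False
      have ur: "u = (False, e) # r" using Cons x False by simp
      have "d [^] k \<otimes> W u = d [^] k \<otimes> (d [^] e \<otimes> W r)" using ur by simp
      also have "\<dots> = d [^] (k + e) \<otimes> W r" using d_c W_c by (simp add: m_assoc[symmetric] d_pow_mult)
      finally have eq: "d [^] k \<otimes> W u = d [^] (k + e) \<otimes> W r" .
      show ?thesis
      proof (cases "k + e = 0")
        case True
        then have "d [^] k \<otimes> W u = W r \<otimes> \<one>" using eq W_c by simp
        moreover have "vld r" using u ur vldP_tl by blast
        ultimately show ?thesis using subgroup.one_closed[OF H_sub] by blast
      next
        case F2: False
        have "vld ((False, k + e) # r)" using u ur F2 vldP_cons_d by auto
        moreover have "d [^] k \<otimes> W u = W ((False, k + e) # r) \<otimes> \<one>" using eq W_c d_c by simp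
        ultimately show ?thesis using subgroup.one_closed[OF H_sub] by blast
      qed
    qed
  qed
qed

lemma stepP_d: "stepP d" using stepP_dpow[of 1] d_c by simp
lemma stepP_di: "stepP (inv d)" using stepP_dpow[of "-1"] d_c by (simp add: int_pow_neg)


lemma c_int: "c = a [^] (int m)" by (simp add: int_pow_int)

lemma cpow_W: "c [^] (q::int) \<otimes> W u = W u \<otimes> c [^] q"
  using comm_int_pow[OF W_c c_c c_W[symmetric]] by simp

lemma a_split: "a [^] (k::int) = a [^] (k mod int m) \<otimes> c [^] (k div int m)"
proof -
  have "a [^] (k mod int m) \<otimes> c [^] (k div int m) = a [^] (k mod int m) \<otimes> a [^] (int m * (k div int m))"
    by (simp add: c_int int_pow_pow[OF a_c])
  also have "\<dots> = a [^] (k mod int m + int m * (k div int m))" by (simp add: a_pow_mult)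
  also have "k mod int m + int m * (k div int m) = k" by simp
  finally show ?thesis by simp
qed

lemma stepP_apow: "stepP (a [^] (k::int))"
  unfolding stepP_def
proof (intro conjI allI impI)
  show "a [^] k \<in> carrier G" using a_c by simp
  fix u assume u: "vld u"
  obtain i rest where ir: "W u = a [^] (i::int) \<otimes> W rest" "vld rest" "rest = [] \<or> \<not> fst (hd rest)"
  proof (cases u)
    case Nil
    then show ?thesis using that[of "0::int" "[]"] W_c by simp
  next
    case (Cons x r)
    obtain b e where x: "x = (b, e)" by (cases x)
    show ?thesis
    proof (cases b)
      case True
      then show ?thesis using that[of e r] u Cons x vldP_cons_a by auto
    next
      case False
      then show ?thesis using that[of "0::int" u] u Cons x W_c[of u] by simp
    qed
  qed
  define r where "r = (k + i) mod int m"
  define q where "q = (k + i) div int m"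
  have r: "0 \<le> r" "r < int m" using m2 by (auto simp: r_def)
  have "a [^] k \<otimes> W u = a [^] k \<otimes> (a [^] i \<otimes> W rest)" using ir by simp
  also have "\<dots> = a [^] (k + i) \<otimes> W rest" using a_c W_c by (simp add: m_assoc[symmetric] a_pow_mult)
  also have "\<dots> = (a [^] r \<otimes> c [^] q) \<otimes> W rest" using a_split[of "k + i"] by (simp add: r_def q_def)
  also have "\<dots> = a [^] r \<otimes> (W rest \<otimes> c [^] q)" using a_c c_c W_c by (simp add: m_assoc cpow_W)
  also have "\<dots> = (a [^] r \<otimes> W rest) \<otimes> c [^] q" using a_c c_c W_c by (simp add: m_assoc)
  finally have eq: "a [^] k \<otimes> W u = (a [^] r \<otimes> W rest) \<otimes> c [^] q" .
  have cq: "c [^] q \<in> H" using sub_int_pow[OF c_H] .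
  show "\<exists>u' h. vld u' \<and> h \<in> H \<and> a [^] k \<otimes> W u = W u' \<otimes> h"
  proof (cases "r = 0")
    case True
    then show ?thesis using eq W_c ir(2) cq by (intro exI[of _ rest] exI[of _ "c [^] q"]) simp
  next
    case False
    have "vld ((True, r) # rest)" using r False ir(2,3) vldP_cons_a by auto
    then show ?thesis using eq cq by (intro exI[of _ "(True, r) # rest"] exI[of _ "c [^] q"]) simp
  qed
qed

lemma stepP_a: "stepP a" using stepP_apow[of 1] a_c by simp
lemma stepP_ai: "stepP (inv a)" using stepP_apow[of "-1"] a_c by (simp add: int_pow_neg)

lemma stepP_H: "h \<in> H \<Longrightarrow> stepP h"
  by (induction rule: generate.induct)
     (auto simp: stepP_one stepP_c stepP_d stepP_ci stepP_di intro: stepP_mult)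

lemma stepP_A: "f \<in> A \<Longrightarrow> stepP f"
proof (induction rule: generate.induct)
  case (inv h)
  then show ?case using stepP_ai stepP_H subgroup.m_inv_closed[OF H_sub] by auto
qed (auto simp: stepP_one stepP_a intro: stepP_H stepP_mult)

lemma NF: "f \<in> A \<Longrightarrow> \<exists>u h. vld u \<and> h \<in> H \<and> f = W u \<otimes> h"
proof -
  assume "f \<in> A"
  then have "stepP f" by (rule stepP_A)
  moreover have "vld []" by simp
  ultimately obtain u h where "vld u" "h \<in> H" "f \<otimes> W [] = W u \<otimes> h" unfolding stepP_def by blast
  moreover have "f \<in> carrier G" using \<open>stepP f\<close> stepP_def by blast
  ultimately show ?thesis by auto
qed

lemma W_core: "\<exists>h\<in>H. W u = h \<otimes> W (core u)"
proof (cases u)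
  case Nil then show ?thesis using W_c subgroup.one_closed[OF H_sub] by force
next
  case (Cons x r)
  obtain b e where x: "x = (b, e)" by (cases x)
  show ?thesis
  proof (cases b)
    case True
    then have "core u = u" using Cons x by simp
    then show ?thesis using W_c subgroup.one_closed[OF H_sub] by (intro bexI[of _ "\<one>"]) auto
  next
    case False then show ?thesis using Cons x sub_int_pow[OF d_H, of e] by auto
  qed
qed

lemma li: "x \<in> carrier G \<Longrightarrow> y \<in> carrier G \<Longrightarrow> inv x \<otimes> (x \<otimes> y) = y"
  by (simp add: m_assoc[symmetric])
lemma ri: "x \<in> carrier G \<Longrightarrow> y \<in> carrier G \<Longrightarrow> x \<otimes> (inv x \<otimes> y) = y"
  by (simp add: m_assoc[symmetric])

lemma dcoset:
  assumes f: "f = W u \<otimes> h" and g: "g = W v \<otimes> h'" and h: "h \<in> H" "h' \<in> H"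
    and cuv: "core u = core v"
  shows "f \<in> H <#> {g} <#> H"
proof -
  obtain h1 where h1: "h1 \<in> H" "W u = h1 \<otimes> W (core u)" using W_core by blast
  obtain h2 where h2: "h2 \<in> H" "W v = h2 \<otimes> W (core u)" using W_core cuv by metis
  have C: "h \<in> carrier G" "h' \<in> carrier G" "h1 \<in> carrier G" "h2 \<in> carrier G"
    using h h1 h2 H_car by auto
  define k where "k = W (core u)"
  have kc: "k \<in> carrier G" using W_c k_def by simp
  have "f = h1 \<otimes> k \<otimes> h" using f h1 k_def by simp
  also have "\<dots> = (h1 \<otimes> inv h2) \<otimes> (h2 \<otimes> k \<otimes> h') \<otimes> (inv h' \<otimes> h)"
    using C kc by (simp add: m_assoc li ri)
  finally have "f = (h1 \<otimes> inv h2) \<otimes> g \<otimes> (inv h' \<otimes> h)" using g h2 k_def by simp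
  moreover have "h1 \<otimes> inv h2 \<in> H" "inv h' \<otimes> h \<in> H"
    using h h1 h2 subgroup.m_closed[OF H_sub] subgroup.m_inv_closed[OF H_sub] by auto
  ultimately show ?thesis unfolding set_mult_def by blast
qed

end



fun alpha :: "nat \<Rightarrow> (bool \<times> int) list \<Rightarrow> (bool \<times> int) list" where
  "alpha P ((True, i) # r) = (if i + 1 = int P then r else (True, i + 1) # r)"
| "alpha P xs = (True, 1) # xs"

fun alphaI :: "nat \<Rightarrow> (bool \<times> int) list \<Rightarrow> (bool \<times> int) list" where
  "alphaI P ((True, i) # r) = (if i = 1 then r else (True, i - 1) # r)"
| "alphaI P xs = (True, int P - 1) # xs"

fun delta :: "nat \<Rightarrow> (bool \<times> int) list \<Rightarrow> (bool \<times> int) list" where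
  "delta t ((False, j) # r) = (if j + 1 = int t then r else (False, j + 1) # r)"
| "delta t [] = []"
| "delta t xs = (False, 1) # xs"

fun deltaI :: "nat \<Rightarrow> (bool \<times> int) list \<Rightarrow> (bool \<times> int) list" where
  "deltaI t ((False, j) # r) = (if j = 1 then r else (False, j - 1) # r)"
| "deltaI t [] = []"
| "deltaI t xs = (False, int t - 1) # xs"

abbreviation vt :: "nat \<Rightarrow> nat \<Rightarrow> (bool \<times> int) list \<Rightarrow> bool" where
  "vt P t \<equiv> vldP P (\<lambda>j. 0 < j \<and> j < int t)"

lemma alpha_v: "P > 1 \<Longrightarrow> vt P t xs \<Longrightarrow> vt P t (alpha P xs)"
  by (induction P xs rule: alpha.induct) (auto simp: vldP_cons_a vldP_cons_d dest: vldP_tl)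


lemma alphaI_v: "P > 1 \<Longrightarrow> vt P t xs \<Longrightarrow> vt P t (alphaI P xs)"
  by (induction P xs rule: alphaI.induct) (auto simp: vldP_cons_a vldP_cons_d dest: vldP_tl)

lemma delta_v: "t > 1 \<Longrightarrow> vt P t xs \<Longrightarrow> vt P t (delta t xs)"
  by (induction t xs rule: delta.induct) (auto simp: vldP_cons_a vldP_cons_d dest: vldP_tl)

lemma deltaI_v: "t > 1 \<Longrightarrow> vt P t xs \<Longrightarrow> vt P t (deltaI t xs)"
  by (induction t xs rule: deltaI.induct) (auto simp: vldP_cons_a vldP_cons_d dest: vldP_tl)

lemma alpha_nA: "r = [] \<or> \<not> fst (hd r) \<Longrightarrow> alpha P r = (True, 1) # r"
proof (cases r)
  case (Cons x r')
  assume h: "r = [] \<or> \<not> fst (hd r)"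
  obtain b e where "x = (b, e)" by (cases x)
  then show ?thesis using h Cons by (cases b) auto
qed simp

lemma alphaI_nA: "r = [] \<or> \<not> fst (hd r) \<Longrightarrow> alphaI P r = (True, int P - 1) # r"
proof (cases r)
  case (Cons x r')
  assume h: "r = [] \<or> \<not> fst (hd r)"
  obtain b e where "x = (b, e)" by (cases x)
  then show ?thesis using h Cons by (cases b) auto
qed simp

lemma delta_nD: "r \<noteq> [] \<Longrightarrow> fst (hd r) \<Longrightarrow> delta t r = (False, 1) # r"
proof (cases r)
  case (Cons x r')
  assume h: "fst (hd r)"
  obtain b e where "x = (b, e)" by (cases x)
  then show ?thesis using h Cons by (cases b) auto
qed simp

lemma deltaI_nD: "r \<noteq> [] \<Longrightarrow> fst (hd r) \<Longrightarrow> deltaI t r = (False, int t - 1) # r"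
proof (cases r)
  case (Cons x r')
  assume h: "fst (hd r)"
  obtain b e where "x = (b, e)" by (cases x)
  then show ?thesis using h Cons by (cases b) auto
qed simp

lemma alphaI_alpha: "P > 1 \<Longrightarrow> vt P t xs \<Longrightarrow> alphaI P (alpha P xs) = xs"
  by (induction P xs rule: alpha.induct) (auto simp: vldP_cons_a vldP_cons_d alpha_nA alphaI_nA delta_nD deltaI_nD dest: vldP_tl)

lemma alpha_alphaI: "P > 1 \<Longrightarrow> vt P t xs \<Longrightarrow> alpha P (alphaI P xs) = xs"
  by (induction P xs rule: alphaI.induct) (auto simp: vldP_cons_a vldP_cons_d alpha_nA alphaI_nA delta_nD deltaI_nD dest: vldP_tl)

lemma deltaI_delta: "t > 1 \<Longrightarrow> vt P t xs \<Longrightarrow> deltaI t (delta t xs) = xs"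
  by (induction t xs rule: delta.induct) (auto simp: vldP_cons_a vldP_cons_d alpha_nA alphaI_nA delta_nD deltaI_nD dest: vldP_tl)

lemma delta_deltaI: "t > 1 \<Longrightarrow> vt P t xs \<Longrightarrow> delta t (deltaI t xs) = xs"
  by (induction t xs rule: deltaI.induct) (auto simp: vldP_cons_a vldP_cons_d alpha_nA alphaI_nA delta_nD deltaI_nD dest: vldP_tl)


lemma funpow_inv:
  assumes "\<And>x. V x \<Longrightarrow> V (f x)" "\<And>x. V x \<Longrightarrow> g (f x) = x" "V x"
  shows "(g ^^ k) ((f ^^ k) x) = x"
  using assms(3)
proof (induction k arbitrary: x)
  case (Suc k)
  have "(g ^^ Suc k) ((f ^^ Suc k) x) = (g ^^ k) (g (f ((f ^^ k) x)))"
  proof -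
    have A: "g ^^ Suc k = g ^^ k \<circ> g" by (rule funpow_Suc_right)
    have B: "f ^^ Suc k = f \<circ> f ^^ k" by simp
    show ?thesis by (simp only: A B comp_apply)
  qed
  also have "\<dots> = (g ^^ k) ((f ^^ k) x)"
  proof -
    have "V ((f ^^ k) x)" using Suc.prems by (induction k) (auto intro: assms(1))
    then show ?thesis using assms(2) by simp
  qed
  finally show ?case using Suc by simp
qed simp

lemma funpow_V: "(\<And>x. V x \<Longrightarrow> V (f x)) \<Longrightarrow> V x \<Longrightarrow> V ((f ^^ k) x)"
  by (induction k) auto

lemma alpha_pow_A: "1 \<le> i \<Longrightarrow> i + k < P \<Longrightarrow> (alpha P ^^ k) ((True, int i) # r) = (True, int (i + k)) # r"
  by (induction k) auto

lemma alpha_pow_nA: "r = [] \<or> \<not> fst (hd r) \<Longrightarrow> 1 \<le> k \<Longrightarrow> k < P \<Longrightarrow> (alpha P ^^ k) r = (True, int k) # r"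
proof (induction k)
  case (Suc k)
  then show ?case by (cases "k = 0") (auto simp: alpha_nA)
qed simp

lemma alpha_pow_P:
  assumes P: "P > 1" and v: "vt P t xs" shows "(alpha P ^^ P) xs = xs"
proof (cases "xs \<noteq> [] \<and> fst (hd xs)")
  case True
  then obtain e r where xs: "xs = (True, e) # r" by (cases xs) auto
  have e: "1 \<le> e" "e < int P" "r = [] \<or> \<not> fst (hd r)" using v xs vldP_cons_a by auto
  define i where "i = nat e"
  have ei: "e = int i" "1 \<le> i" "i < P" using e i_def by auto
  have "(alpha P ^^ P) xs = (alpha P ^^ i) (alpha P ((alpha P ^^ (P - i - 1)) xs))"
  proof -
    obtain k where k: "P = i + Suc k" "k = P - i - 1" using ei by (intro that[of "P - i - 1"]) auto
    have "(alpha P ^^ (i + Suc k)) xs = (alpha P ^^ i) (alpha P ((alpha P ^^ k) xs))"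
      by (simp only: funpow_add funpow.simps(2) comp_apply)
    then show ?thesis using k(1) by simp
  qed
  also have "(alpha P ^^ (P - i - 1)) xs = (True, int (P - 1)) # r"
    using alpha_pow_A[of i "P - i - 1" P r] ei xs by simp
  also have "alpha P ((True, int (P - 1)) # r) = r" using P by simp
  also have "(alpha P ^^ i) r = xs" using alpha_pow_nA[OF e(3) ei(2,3)] xs ei by simp
  finally show ?thesis .
next
  case False
  then have nA: "xs = [] \<or> \<not> fst (hd xs)" by auto
  have "(alpha P ^^ P) xs = alpha P ((alpha P ^^ (P - 1)) xs)"
  proof -
    obtain k where k: "P = Suc k" "k = P - 1" using P by (intro that[of "P - 1"]) auto
    have "(alpha P ^^ (Suc k)) xs = alpha P ((alpha P ^^ k) xs)" by simp
    then show ?thesis using k(1) by simp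
  qed
  also have "(alpha P ^^ (P - 1)) xs = (True, int (P - 1)) # xs" using alpha_pow_nA[OF nA, of "P - 1"] P by simp
  also have "alpha P ((True, int (P - 1)) # xs) = xs" using P by simp
  finally show ?thesis .
qed

lemma delta_pow_D: "1 \<le> j \<Longrightarrow> j + k < t \<Longrightarrow> (delta t ^^ k) ((False, int j) # r) = (False, int (j + k)) # r"
  by (induction k) auto

lemma delta_pow_nD: "r \<noteq> [] \<Longrightarrow> fst (hd r) \<Longrightarrow> 1 \<le> k \<Longrightarrow> k < t \<Longrightarrow> (delta t ^^ k) r = (False, int k) # r"
proof (induction k)
  case (Suc k)
  then show ?case by (cases "k = 0") (auto simp: delta_nD)
qed simp

lemma delta_pow_Nil: "(delta t ^^ k) [] = []"
  by (induction k) auto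

lemma delta_pow_t:
  assumes t: "t > 1" and v: "vt P t xs" shows "(delta t ^^ t) xs = xs"
proof (cases "xs = []")
  case True then show ?thesis by (simp add: delta_pow_Nil)
next
  case nE: False
  show ?thesis
  proof (cases "fst (hd xs)")
    case False
    then obtain e r where xs: "xs = (False, e) # r" using nE by (cases xs) auto
    have e: "0 < e" "e < int t" "r \<noteq> []" "fst (hd r)" using v xs vldP_cons_d by auto
    define i where "i = nat e"
    have ei: "e = int i" "1 \<le> i" "i < t" using e i_def by auto
    have "(delta t ^^ t) xs = (delta t ^^ i) (delta t ((delta t ^^ (t - i - 1)) xs))"
    proof -
      obtain k where k: "t = i + Suc k" "k = t - i - 1" using ei by (intro that[of "t - i - 1"]) auto
      have "(delta t ^^ (i + Suc k)) xs = (delta t ^^ i) (delta t ((delta t ^^ k) xs))"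
        by (simp only: funpow_add funpow.simps(2) comp_apply)
      then show ?thesis using k(1) by simp
    qed
    also have "(delta t ^^ (t - i - 1)) xs = (False, int (t - 1)) # r"
      using delta_pow_D[of i "t - i - 1" t r] ei xs by simp
    also have "delta t ((False, int (t - 1)) # r) = r" using t by simp
    also have "(delta t ^^ i) r = xs" using delta_pow_nD[OF e(3,4) ei(2,3)] xs ei by simp
    finally show ?thesis .
  next
    case True
    have "(delta t ^^ t) xs = delta t ((delta t ^^ (t - 1)) xs)"
    proof -
      obtain k where k: "t = Suc k" "k = t - 1" using t by (intro that[of "t - 1"]) auto
      have "(delta t ^^ (Suc k)) xs = delta t ((delta t ^^ k) xs)" by simp
      then show ?thesis using k(1) by simp
    qed
    also have "(delta t ^^ (t - 1)) xs = (False, int (t - 1)) # xs" using delta_pow_nD[OF nE True, of "t - 1"] t by simp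
    also have "delta t ((False, int (t - 1)) # xs) = xs" using t by simp
    finally show ?thesis .
  qed
qed

lemma deltaI_pow_nD: "r \<noteq> [] \<Longrightarrow> fst (hd r) \<Longrightarrow> 1 \<le> k \<Longrightarrow> k < t \<Longrightarrow> (deltaI t ^^ k) r = (False, int t - int k) # r"
proof (induction k)
  case (Suc k)
  then show ?case by (cases "k = 0") (auto simp: deltaI_nD)
qed simp

lemma core_A: "r \<noteq> [] \<Longrightarrow> fst (hd r) \<Longrightarrow> core r = r"
proof (cases r)
  case (Cons x r')
  assume h: "fst (hd r)"
  obtain b e where "x = (b, e)" by (cases x)
  then show ?thesis using h Cons by (cases b) auto
qed simp

lemma core_delta: "vt P t xs \<Longrightarrow> core (delta t xs) = core xs"
  by (induction t xs rule: delta.induct) (auto simp: vldP_cons_d core_A)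

lemma core_delta_pow: "t > 1 \<Longrightarrow> vt P t xs \<Longrightarrow> core ((delta t ^^ k) xs) = core xs"
proof (induction k)
  case (Suc k)
  have "vt P t ((delta t ^^ k) xs)" using funpow_V[of "vt P t" "delta t" xs k] delta_v[of t P] Suc.prems by blast
  then show ?case using Suc.IH Suc.prems core_delta[of P t "(delta t ^^ k) xs"] by simp
qed simp



type_synonym state = "(bool \<times> int) list \<times> nat"

definition Bf :: "nat \<Rightarrow> nat \<Rightarrow> state \<Rightarrow> state" where
  "Bf Q t s = (if Suc (snd s) < Q then (fst s, Suc (snd s)) else (delta t (fst s), 0))"

definition BI :: "nat \<Rightarrow> nat \<Rightarrow> state \<Rightarrow> state" where
  "BI Q t s = (if snd s = 0 then (deltaI t (fst s), Q - 1) else (fst s, snd s - 1))"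

fun act :: "gen \<Rightarrow> nat \<Rightarrow> nat \<Rightarrow> nat \<Rightarrow> letter \<Rightarrow> state \<Rightarrow> state" where
  "act x0 P Q t (g, e) s = (if g = x0 then ((if e then alphaI P else alpha P) (fst s), snd s)
       else (if e then BI Q t s else Bf Q t s))"

definition ev :: "gen \<Rightarrow> nat \<Rightarrow> nat \<Rightarrow> nat \<Rightarrow> word \<Rightarrow> state \<Rightarrow> state" where
  "ev x0 P Q t w s = foldr (act x0 P Q t) w s"

lemma ev_Nil[simp]: "ev x0 P Q t [] s = s" by (simp add: ev_def)
lemma ev_Cons[simp]: "ev x0 P Q t (l # w) s = act x0 P Q t l (ev x0 P Q t w s)" by (simp add: ev_def)
lemma ev_append[simp]: "ev x0 P Q t (u @ v) s = ev x0 P Q t u (ev x0 P Q t v s)" by (simp add: ev_def)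
lemma ev_rep: "ev x0 P Q t (replicate k l) s = (act x0 P Q t l ^^ k) s"
  by (induction k) auto

locale actl =
  fixes x0 :: gen and P Q t :: nat
  assumes P1: "P > 1" and Q0: "Q > 0" and t1: "t > 1"
begin

definition SV :: "state \<Rightarrow> bool" where "SV s \<longleftrightarrow> vt P t (fst s) \<and> snd s < Q"

abbreviation "A \<equiv> act x0 P Q t"
abbreviation "E \<equiv> ev x0 P Q t"

lemma Bf_v: "SV s \<Longrightarrow> SV (Bf Q t s)"
  using delta_v[OF t1] Q0 by (auto simp: SV_def Bf_def)

lemma BI_v: "SV s \<Longrightarrow> SV (BI Q t s)"
  using deltaI_v[OF t1] Q0 by (auto simp: SV_def BI_def)

lemma act_v: "SV s \<Longrightarrow> SV (A l s)"
  using Bf_v BI_v alpha_v[OF P1] alphaI_v[OF P1] by (cases l) (auto simp: SV_def)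

lemma ev_v: "SV s \<Longrightarrow> SV (E w s)"
  by (induction w) (auto intro: act_v)

lemma BI_Bf: "SV s \<Longrightarrow> BI Q t (Bf Q t s) = s"
  using deltaI_delta[OF t1] Q0 by (cases s) (auto simp: SV_def Bf_def BI_def)

lemma Bf_BI: "SV s \<Longrightarrow> Bf Q t (BI Q t s) = s"
  using delta_deltaI[OF t1] Q0 by (cases s) (auto simp: SV_def Bf_def BI_def)

lemma act_linv: "SV s \<Longrightarrow> A (linv l) (A l s) = s"
  using BI_Bf Bf_BI alphaI_alpha[OF P1] alpha_alphaI[OF P1]
  by (cases l) (auto simp: SV_def)

lemma ev_cancel: "SV s \<Longrightarrow> E (u @ [l, linv l] @ v) s = E (u @ v) s"
proof -
  assume s: "SV s"
  obtain x e where l: "l = (x, e)" by (cases l)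
  have "A l (A (linv l) (E v s)) = E v s"
    using act_linv[OF ev_v[OF s], of "linv l" v] l by simp
  then show ?thesis by simp
qed

lemma alpha_act_pow: "(A (x0, False) ^^ k) s = ((alpha P ^^ k) (fst s), snd s)"
  by (induction k) auto

lemma alphaI_act_pow: "(A (x0, True) ^^ k) s = ((alphaI P ^^ k) (fst s), snd s)"
  by (induction k) auto

lemma alpha_id: "SV s \<Longrightarrow> (A (x0, False) ^^ P) s = s"
proof -
  assume s: "SV s"
  then have "vt P t (fst s)" by (simp add: SV_def)
  then show ?thesis using alpha_pow_P[OF P1, of t "fst s"] by (simp add: alpha_act_pow)
qed

lemma alphaI_id: "SV s \<Longrightarrow> (A (x0, True) ^^ P) s = s"
proof -
  assume s: "SV s"
  have "(alphaI P ^^ P) ((alpha P ^^ P) (fst s)) = fst s"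
    by (rule funpow_inv[of "vt P t"]) (use s alpha_v[OF P1] alphaI_alpha[OF P1] in \<open>auto simp: SV_def\<close>)
  moreover have "vt P t (fst s)" using s by (simp add: SV_def)
  ultimately show ?thesis using alpha_pow_P[OF P1, of t "fst s"] by (simp add: alphaI_act_pow)
qed

lemma Bf_pow: "k + j < Q \<Longrightarrow> (Bf Q t ^^ j) (xs, k) = (xs, k + j)"
  by (induction j) (auto simp: Bf_def)

lemma BI_pow: "j \<le> k \<Longrightarrow> (BI Q t ^^ j) (xs, k) = (xs, k - j)"
  by (induction j) (auto simp: BI_def)

lemma Bf_pow_Q: "k < Q \<Longrightarrow> (Bf Q t ^^ Q) (xs, k) = (delta t xs, k)"
proof -
  assume k: "k < Q"
  obtain j where j: "Q = k + Suc j" "j = Q - k - 1" using k by (intro that[of "Q - k - 1"]) auto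
  have "(Bf Q t ^^ (k + Suc j)) (xs, k) = (Bf Q t ^^ k) (Bf Q t ((Bf Q t ^^ j) (xs, k)))"
    by (simp only: funpow_add funpow.simps(2) comp_apply)
  also have "(Bf Q t ^^ j) (xs, k) = (xs, k + j)" using Bf_pow[of k j] j(1) by simp
  also have "Bf Q t (xs, k + j) = (delta t xs, 0)" using j(1) by (simp add: Bf_def)
  also have "(Bf Q t ^^ k) (delta t xs, 0) = (delta t xs, k)" using Bf_pow[of 0 k] k by simp
  finally show ?thesis using j(1) by simp
qed

lemma BI_pow_Q: "(BI Q t ^^ Q) (xs, 0) = (deltaI t xs, 0)"
proof -
  obtain j where j: "Q = Suc j" "j = Q - 1" using Q0 by (intro that[of "Q - 1"]) auto
  have "(BI Q t ^^ (Suc j)) (xs, 0) = (BI Q t ^^ j) (BI Q t (xs, 0))"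
    by (simp only: funpow_Suc_right comp_apply)
  also have "BI Q t (xs, 0) = (deltaI t xs, j)" using j(2) by (simp add: BI_def)
  also have "(BI Q t ^^ j) (deltaI t xs, j) = (deltaI t xs, 0)" using BI_pow[of j j] by simp
  finally show ?thesis using j(1) by simp
qed

lemma Bf_pow_Qj: "k < Q \<Longrightarrow> (Bf Q t ^^ (Q * j)) (xs, k) = ((delta t ^^ j) xs, k)"
proof (induction j)
  case (Suc j)
  have "(Bf Q t ^^ (Q * Suc j)) (xs, k) = (Bf Q t ^^ Q) ((Bf Q t ^^ (Q * j)) (xs, k))"
    by (simp add: funpow_add)
  then show ?case using Suc Bf_pow_Q by simp
qed simp

lemma BI_pow_Qj: "(BI Q t ^^ (Q * j)) (xs, 0) = ((deltaI t ^^ j) xs, 0)"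
proof (induction j)
  case (Suc j)
  have "(BI Q t ^^ (Q * Suc j)) (xs, 0) = (BI Q t ^^ Q) ((BI Q t ^^ (Q * j)) (xs, 0))"
    by (simp add: funpow_add)
  then show ?case using Suc BI_pow_Q by simp
qed simp


lemma pres_respect:
  assumes "pres_eq R u v" "\<And>r s. r \<in> R \<Longrightarrow> SV s \<Longrightarrow> E r s = s" "SV s"
  shows "E u s = E v s"
  using assms(1)
proof (induction rule: pres_eq.induct)
  case (cancel u l v) then show ?case using ev_cancel[OF assms(3)] by simp
next
  case (relator r u v) then show ?case using assms(2)[OF relator ev_v[OF assms(3)]] by simp
qed auto

lemma actB: "g \<noteq> x0 \<Longrightarrow> A (g, False) = Bf Q t" by (rule ext) simp
lemma actBI: "g \<noteq> x0 \<Longrightarrow> A (g, True) = BI Q t" by (rule ext) simp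

lemma alpha_id_mult: "SV s \<Longrightarrow> (A (x0, False) ^^ (P * j)) s = s"
proof (induction j)
  case (Suc j)
  have "(A (x0, False) ^^ (P * Suc j)) s = (A (x0, False) ^^ P) ((A (x0, False) ^^ (P * j)) s)"
    by (simp only: mult_Suc_right funpow_add comp_apply)
  then show ?case using Suc alpha_id by (simp del: act.simps)
qed simp

lemma Bf_id: "SV s \<Longrightarrow> (Bf Q t ^^ (Q * t)) s = s"
proof -
  assume s: "SV s"
  obtain xs k where sk: "s = (xs, k)" by (cases s)
  then have "k < Q" "vt P t xs" using s by (auto simp: SV_def)
  then show ?thesis using Bf_pow_Qj[of k t xs] delta_pow_t[OF t1] sk by simp
qed

lemma BI_Bf_pow: "SV s \<Longrightarrow> (BI Q t ^^ k) ((Bf Q t ^^ k) s) = s"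
  by (rule funpow_inv[of SV]) (auto intro: Bf_v BI_Bf)

end

lemma wpow_pos: "wpow x (int k) = replicate k (x, False)"
  by (simp add: wpow_def)
lemma wpow_neg: "k > 0 \<Longrightarrow> wpow x (- int k) = replicate k (x, True)"
  by (simp add: wpow_def)

locale actr = actl +
  fixes m n :: nat
  assumes mn: "(x0 = Ga \<and> P = m \<and> Q = n) \<or> (x0 = Gb \<and> P = n \<and> Q = m)"
begin

abbreviation "Rt \<equiv> {comm_rel m n, wpow Ga (int (m * t)), wpow Gb (int (n * t))}"

lemma rel_id: "r \<in> Rt \<Longrightarrow> SV s \<Longrightarrow> E r s = s"
proof -
  assume r: "r \<in> Rt" and s: "SV s"
  have mn0: "m > 0" "n > 0" using mn P1 Q0 by auto
  have c: "comm_rel m n = replicate m (Ga, True) @ replicate n (Gb, True) @ replicate m (Ga, False) @ replicate n (Gb, False)"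
    using mn0 by (simp add: comm_rel_def wpow_pos wpow_neg)
  show ?thesis
  proof (cases "x0 = Ga")
    case True
    then have PQ: "P = m" "Q = n" using mn by auto
    have y: "Gb \<noteq> x0" using True by simp
    have c': "comm_rel m n = replicate P (x0, True) @ replicate Q (Gb, True) @ replicate P (x0, False) @ replicate Q (Gb, False)"
      using c True PQ by simp
    have v1: "SV ((Bf Q t ^^ Q) s)" using funpow_V[of SV "Bf Q t"] Bf_v s by blast
    have "E (comm_rel m n) s = (A (x0, True) ^^ P) ((BI Q t ^^ Q) ((A (x0, False) ^^ P) ((Bf Q t ^^ Q) s)))"
      by (simp only: c' ev_append ev_rep actB[OF y] actBI[OF y])
    also have "\<dots> = s" using alpha_id[OF v1] alphaI_id[OF s] BI_Bf_pow[OF s, of Q] by (simp del: act.simps)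
    finally have 1: "E (comm_rel m n) s = s" .
    have 2: "E (wpow Ga (int (m * t))) s = s"
      unfolding wpow_pos ev_rep using alpha_id_mult[OF s, of t] True PQ by (simp del: act.simps)
    have 3: "E (wpow Gb (int (n * t))) s = s"
      unfolding wpow_pos ev_rep actB[OF y] using Bf_id[OF s] PQ by (simp del: act.simps)
    show ?thesis using r 1 2 3 by auto
  next
    case False
    then have PQ: "x0 = Gb" "P = n" "Q = m" using mn by auto
    have y: "Ga \<noteq> x0" using PQ by simp
    have c': "comm_rel m n = replicate Q (Ga, True) @ replicate P (x0, True) @ replicate Q (Ga, False) @ replicate P (x0, False)"
      using c PQ by simp
    have v1: "SV ((A (x0, False) ^^ P) s)" using funpow_V[of SV "A (x0, False)"] act_v s by blast
    have "E (comm_rel m n) s = (BI Q t ^^ Q) ((A (x0, True) ^^ P) ((Bf Q t ^^ Q) ((A (x0, False) ^^ P) s)))"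
      by (simp only: c' ev_append ev_rep actB[OF y] actBI[OF y])
    also have "\<dots> = s" using alpha_id[OF s] BI_Bf_pow[OF s, of Q] alphaI_id funpow_V[of SV "Bf Q t"] Bf_v s
      by (simp del: act.simps)
    finally have 1: "E (comm_rel m n) s = s" .
    have 2: "E (wpow Gb (int (n * t))) s = s"
      unfolding wpow_pos ev_rep using alpha_id_mult[OF s, of t] PQ by (simp del: act.simps)
    have 3: "E (wpow Ga (int (m * t))) s = s"
      unfolding wpow_pos ev_rep actB[OF y] using Bf_id[OF s] PQ by (simp del: act.simps)
    show ?thesis using r 1 2 3 by auto
  qed
qed

lemma respect: "pres_eq Rt u v \<Longrightarrow> SV s \<Longrightarrow> E u s = E v s"
  using pres_respect rel_id by blast

end



fun WW :: "gen \<Rightarrow> gen \<Rightarrow> nat \<Rightarrow> (bool \<times> int) list \<Rightarrow> word" where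
  "WW x0 y0 Q [] = []"
| "WW x0 y0 Q ((b, e) # r) = (if b then replicate (nat e) (x0, False)
      else if e \<ge> 0 then replicate (Q * nat e) (y0, False) else replicate (Q * nat (- e)) (y0, True))
     @ WW x0 y0 Q r"

definition red :: "nat \<Rightarrow> (bool \<times> int) list \<Rightarrow> (bool \<times> int) list" where
  "red t u = map (\<lambda>(b, e). if b then (b, e) else (b, e mod int t)) u"

lemma red_Nil[simp]: "red t [] = []" by (simp add: red_def)
lemma red_Cons[simp]: "red t ((b, e) # r) = (if b then (b, e) else (b, e mod int t)) # red t r"
  by (simp add: red_def)
lemma red_fst: "map fst (red t u) = map fst u"
  by (induction u) (auto simp: red_def split: prod.splits if_splits)

lemma red_hd: "(red t r = []) = (r = []) \<and> (r \<noteq> [] \<longrightarrow> fst (hd (red t r)) = fst (hd r))"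
  by (cases r) (auto simp: red_def split: prod.splits)

lemma core_red: "core (red t u) = red t (core u)"
proof (cases u)
  case (Cons x r)
  obtain b e where "x = (b, e)" by (cases x)
  then show ?thesis using Cons by (cases b) auto
qed simp

lemma concat_rep1: "concat (replicate k [l]) = replicate k l"
  by (induction k) auto

lemma winv_rep: "winv (replicate k (y, False)) = replicate k (y, True)"
  by (simp add: winv_def)

lemma mod_small_inj:
  fixes e e' :: int
  assumes "\<bar>e\<bar> \<le> M" "\<bar>e'\<bar> \<le> M" "2 * M < t" "e mod t = e' mod t"
  shows "e = e'"
proof -
  have "t dvd (e - e')" using assms(4) by (simp add: mod_eq_dvd_iff)
  then obtain k where k: "e - e' = t * k" by blast
  have "\<bar>e - e'\<bar> < t" using assms by linarith
  then have "k = 0" using k assms(3)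
    by (smt (verit, best) mult_less_cancel_left2 mult_minus_right abs_ge_zero)
  then show ?thesis using k by simp
qed

lemma red_inj:
  "(\<forall>x\<in>set u. \<bar>snd x\<bar> \<le> M) \<Longrightarrow> (\<forall>x\<in>set v. \<bar>snd x\<bar> \<le> M) \<Longrightarrow> 2 * M < int t \<Longrightarrow>
   red t u = red t v \<Longrightarrow> u = v"
proof (induction u arbitrary: v)
  case Nil then show ?case by (simp add: red_def)
next
  case (Cons x u)
  obtain y v' where v: "v = y # v'" using Cons.prems(4) by (cases v) (auto simp: red_def)
  obtain b e where x: "x = (b, e)" by (cases x)
  obtain b' e' where y: "y = (b', e')" by (cases y)
  have bb: "b = b'" and ee: "(if b then e else e mod int t) = (if b' then e' else e' mod int t)"
    and rr: "red t u = red t v'"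
    using Cons.prems(4) v x y by (auto split: if_splits)
  have "e = e'"
  proof (cases b)
    case True then show ?thesis using ee bb by simp
  next
    case False
    then have "e mod int t = e' mod int t" using ee bb by simp
    then show ?thesis using mod_small_inj[of e M e' "int t"] Cons.prems(1,2,3) v x y by auto
  qed
  moreover have "u = v'" using Cons.IH[of v'] Cons.prems v rr by auto
  ultimately show ?case using v x y bb by simp
qed


lemma mod_nz: "(e::int) \<noteq> 0 \<Longrightarrow> \<bar>e\<bar> < t \<Longrightarrow> e mod t \<noteq> 0"
  using dvd_imp_le_int[of e t] by (auto simp: mod_eq_0_iff_dvd)

lemma mod_negsmall: "(e::int) < 0 \<Longrightarrow> - t \<le> e \<Longrightarrow> e mod t = t + e"
proof -
  assume h: "e < 0" "- t \<le> e"
  have "e mod t = (e + t) mod t" by simp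
  also have "\<dots> = e + t" using h by (intro mod_pos_pos_trivial) auto
  finally show ?thesis by simp
qed

lemma vt_red: "vldP P (\<lambda>j. j \<noteq> 0) u \<Longrightarrow> (\<forall>x\<in>set u. \<bar>snd x\<bar> < int t) \<Longrightarrow> t > 0 \<Longrightarrow> vt P t (red t u)"
proof (induction u)
  case (Cons x r)
  obtain b e where x: "x = (b, e)" by (cases x)
  have vr: "vt P t (red t r)" using Cons.IH Cons.prems vldP_tl x by auto
  show ?case
  proof (cases b)
    case True
    have e: "1 \<le> e" "e < int P" "r = [] \<or> \<not> fst (hd r)" using Cons.prems(1) x True vldP_cons_a by auto
    have rr: "red t r = [] \<or> \<not> fst (hd (red t r))" using e(3) red_hd[of t r] by auto
    have "vt P t ((True, e) # red t r)" unfolding vldP_cons_a using e rr vr by blast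
    then show ?thesis using x True by simp
  next
    case False
    have e: "e \<noteq> 0" "\<bar>e\<bar> < int t" "r \<noteq> []" "fst (hd r)"
      using Cons.prems(1,2) x False vldP_cons_d[of P _ e r] by auto
    have rr: "red t r \<noteq> []" "fst (hd (red t r))" using e(3,4) red_hd[of t r] by auto
    have "e mod int t \<noteq> 0" using mod_nz[OF e(1,2)] .
    moreover have "0 \<le> e mod int t" "e mod int t < int t" using Cons.prems(3) by simp_all
    ultimately have "0 < e mod int t \<and> e mod int t < int t" by simp
    then have "vt P t ((False, e mod int t) # red t r)" unfolding vldP_cons_d using rr vr by blast
    then show ?thesis using x False by simp
  qed
qed simp

context actl begin

lemma ev_WW:
  assumes y: "y0 \<noteq> x0"
  shows "vldP P (\<lambda>j. j \<noteq> 0) u \<Longrightarrow> (\<forall>x\<in>set u. \<bar>snd x\<bar> < int t) \<Longrightarrow> E (WW x0 y0 Q u) ([], 0) = (red t u, 0)"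
proof (induction u)
  case (Cons x r)
  obtain b e where x: "x = (b, e)" by (cases x)
  have IH: "E (WW x0 y0 Q r) ([], 0) = (red t r, 0)" using Cons vldP_tl x by auto
  show ?case
  proof (cases b)
    case True
    have e: "1 \<le> e" "e < int P" "r = [] \<or> \<not> fst (hd r)" using Cons.prems x True vldP_cons_a by auto
    have rr: "red t r = [] \<or> \<not> fst (hd (red t r))" using e(3) red_hd[of t r] by auto
    have "E (WW x0 y0 Q ((b, e) # r)) ([], 0) = (A (x0, False) ^^ nat e) (red t r, 0)"
      using True IH by (simp add: ev_rep del: act.simps)
    also have "\<dots> = ((True, e) # red t r, 0)"
      using alpha_pow_nA[OF rr, of "nat e" P] e by (simp add: alpha_act_pow)
    finally show ?thesis using x True by simp
  next
    case False
    have e: "e \<noteq> 0" "\<bar>e\<bar> < int t" "r \<noteq> []" "fst (hd r)" using Cons.prems x False by (auto simp: vldP_cons_d)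
    have rr: "red t r \<noteq> []" "fst (hd (red t r))" using e(3,4) red_hd[of t r] by auto
    show ?thesis
    proof (cases "e \<ge> 0")
      case True
      have "E (WW x0 y0 Q ((b, e) # r)) ([], 0) = (Bf Q t ^^ (Q * nat e)) (red t r, 0)"
        using True False IH by (simp add: ev_rep actB[OF y] del: act.simps)
      also have "\<dots> = ((delta t ^^ nat e) (red t r), 0)" using Bf_pow_Qj Q0 by simp
      also have "\<dots> = ((False, e) # red t r, 0)" using delta_pow_nD[OF rr, of "nat e" t] e True by simp
      finally show ?thesis using x False True e by simp
    next
      case F2: False
      have "E (WW x0 y0 Q ((b, e) # r)) ([], 0) = (BI Q t ^^ (Q * nat (- e))) (red t r, 0)"
        using F2 False IH by (simp add: ev_rep actBI[OF y] del: act.simps)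
      also have "\<dots> = ((deltaI t ^^ nat (- e)) (red t r), 0)" using BI_pow_Qj by simp
      also have "\<dots> = ((False, int t + e) # red t r, 0)" using deltaI_pow_nD[OF rr, of "nat (- e)" t] e F2 by simp
      also have "int t + e = e mod int t" using e F2 mod_negsmall[of e "int t"] by simp
      finally show ?thesis using x False F2 by simp
    qed
  qed
qed simp

end



abbreviation "Rt m n t \<equiv> {comm_rel m n, wpow Ga (int (m * t)), wpow Gb (int (n * t))}"

lemma rho_class: "rho m n t (word_class {comm_rel m n} w) = word_class (Rt m n t) w"
proof -
  have "pres_eq {comm_rel m n} w (SOME w'. w' \<in> word_class {comm_rel m n} w)"
    using some_in_class mem_class by fast
  then have "pres_eq (Rt m n t) w (SOME w'. w' \<in> word_class {comm_rel m n} w)"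
    by (rule pres_eq_mono) auto
  then show ?thesis unfolding rho_def by (simp add: class_eq_iff pres_eq.sym)
qed

lemma class_of_carrier: "X \<in> carrier (presented_group R) \<Longrightarrow> \<exists>w. X = word_class R w"
  by (auto simp: carrier_pg)

lemma pow_class1: "word_class R [l] [^]\<^bsub>presented_group R\<^esub> (k::nat) = word_class R (replicate k l)"
  by (simp add: pow_pg concat_rep1)

context actr begin

lemma E_class: "w \<in> word_class {comm_rel m n} w0 \<Longrightarrow> SV s \<Longrightarrow> E w s = E w0 s"
proof -
  assume w: "w \<in> word_class {comm_rel m n} w0" and s: "SV s"
  have "pres_eq {comm_rel m n} w0 w" using w mem_class by fast
  then have "pres_eq Rt w0 w" by (rule pres_eq_mono) auto
  then show ?thesis using respect[OF _ s] by (simp add: pres_eq.sym)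
qed

end


lemma (in group) comm_from_rel:
  assumes c: "x \<in> carrier G" "y \<in> carrier G" and r: "inv x \<otimes> (inv y \<otimes> (x \<otimes> y)) = \<one>"
  shows "x \<otimes> y = y \<otimes> x"
proof -
  have "inv y \<otimes> (x \<otimes> y) = x" using c r inv_solve_left'[of "\<one>" x "inv y \<otimes> (x \<otimes> y)"] by simp
  then show ?thesis using c inv_solve_left'[of x y "x \<otimes> y"] by simp
qed

locale mainloc =
  fixes x0 y0 :: gen and m n P Q :: nat
  assumes m1: "m > 1" and n1: "n > 1"
    and xy: "(x0 = Ga \<and> y0 = Gb \<and> P = m \<and> Q = n) \<or> (x0 = Gb \<and> y0 = Ga \<and> P = n \<and> Q = m)"
begin

abbreviation "R1 \<equiv> {comm_rel m n}"
abbreviation "G1 \<equiv> presented_group R1"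
abbreviation "aa \<equiv> word_class R1 [(x0, False)]"
abbreviation "dd \<equiv> word_class R1 [(y0, False)] [^]\<^bsub>G1\<^esub> Q"
abbreviation "HH \<equiv> generate G1 {aa [^]\<^bsub>G1\<^esub> P, dd}"

lemma grp: "group G1" by (rule group_pg)
lemma P1: "P > 1" using xy m1 n1 by auto
lemma Q1: "Q > 1" using xy m1 n1 by auto
lemma yx: "y0 \<noteq> x0" using xy by auto

lemma aaP: "aa [^]\<^bsub>G1\<^esub> P = word_class R1 (replicate P (x0, False))" by (rule pow_class1)
lemma ddQ: "dd = word_class R1 (replicate Q (y0, False))" by (rule pow_class1)

lemma aa_c: "aa \<in> carrier G1" by (simp add: carrier_pg)
lemma dd_c: "dd \<in> carrier G1" by (simp add: carrier_pg ddQ)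

lemma comm_cd:
  "word_class R1 (replicate m (Ga, False)) \<otimes>\<^bsub>G1\<^esub> word_class R1 (replicate n (Gb, False)) =
   word_class R1 (replicate n (Gb, False)) \<otimes>\<^bsub>G1\<^esub> word_class R1 (replicate m (Ga, False))"
  (is "?c \<otimes>\<^bsub>G1\<^esub> ?d = ?d \<otimes>\<^bsub>G1\<^esub> ?c")
proof -
  have cc: "?c \<in> carrier G1" "?d \<in> carrier G1" by (simp_all add: carrier_pg)
  have "pres_eq R1 ([] @ comm_rel m n @ []) ([] @ [])" by (rule pres_eq.relator) simp
  then have one: "word_class R1 (comm_rel m n) = \<one>\<^bsub>G1\<^esub>" by (simp add: class_eq_iff one_pg)
  have "comm_rel m n = winv (replicate m (Ga, False)) @ winv (replicate n (Gb, False)) @ replicate m (Ga, False) @ replicate n (Gb, False)"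
    using m1 n1 by (simp add: comm_rel_def wpow_pos wpow_neg winv_rep)
  then have "word_class R1 (comm_rel m n) = inv\<^bsub>G1\<^esub> ?c \<otimes>\<^bsub>G1\<^esub> (inv\<^bsub>G1\<^esub> ?d \<otimes>\<^bsub>G1\<^esub> (?c \<otimes>\<^bsub>G1\<^esub> ?d))"
    by (simp add: mult_pg inv_pg)
  then show ?thesis using group.comm_from_rel[OF grp cc] one by simp
qed

lemma cd: "aa [^]\<^bsub>G1\<^esub> P \<otimes>\<^bsub>G1\<^esub> dd = dd \<otimes>\<^bsub>G1\<^esub> aa [^]\<^bsub>G1\<^esub> P"
  using xy comm_cd by (auto simp: aaP ddQ)

lemma nf_inst: "nf G1 aa dd P"
  by (intro nf.intro nf_axioms.intro grp aa_c dd_c P1 cd)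


lemma HH_c: "HH \<subseteq> carrier G1"
  by (rule group.generate_incl[OF grp]) (simp add: aaP ddQ carrier_pg)

lemma W_class: "vldP P (\<lambda>j. j \<noteq> 0) u \<Longrightarrow> wh G1 aa dd u = word_class R1 (WW x0 y0 Q u)"
proof (induction u)
  case Nil then show ?case by (simp add: one_pg)
next
  case (Cons x r)
  obtain b e where x: "x = (b, e)" by (cases x)
  have IH: "wh G1 aa dd r = word_class R1 (WW x0 y0 Q r)" using Cons vldP_tl x by auto
  have piece: "(if b then aa [^]\<^bsub>G1\<^esub> e else dd [^]\<^bsub>G1\<^esub> e) = word_class R1
      (if b then replicate (nat e) (x0, False)
       else if e \<ge> 0 then replicate (Q * nat e) (y0, False) else replicate (Q * nat (- e)) (y0, True))"
  proof (cases b)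
    case True
    then have "e \<ge> 1" using Cons.prems x vldP_cons_a by auto
    then have "aa [^]\<^bsub>G1\<^esub> e = aa [^]\<^bsub>G1\<^esub> (nat e)" using pow_nat[of e G1 aa] by simp
    then show ?thesis using True by (simp add: pow_class1)
  next
    case False
    have ddp: "dd [^]\<^bsub>G1\<^esub> (k::nat) = word_class R1 (replicate (Q * k) (y0, False))" for k
    proof -
      have "dd [^]\<^bsub>G1\<^esub> k = word_class R1 [(y0, False)] [^]\<^bsub>G1\<^esub> (Q * k)"
        using monoid.nat_pow_pow[OF group.is_monoid[OF grp], of "word_class R1 [(y0, False)]" Q k]
        by (simp add: carrier_pg)
      then show ?thesis by (simp add: pow_class1)
    qed
    show ?thesis
    proof (cases "e \<ge> 0")
      case True
      then have "dd [^]\<^bsub>G1\<^esub> e = dd [^]\<^bsub>G1\<^esub> (nat e)" using pow_nat[of e G1 dd] by simp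
      then show ?thesis using True False ddp by simp
    next
      case F2: False
      then have "dd [^]\<^bsub>G1\<^esub> e = inv\<^bsub>G1\<^esub> (dd [^]\<^bsub>G1\<^esub> (nat (- e)))"
        unfolding int_pow_def2[of G1 dd e] by simp
      then show ?thesis using F2 False ddp by (simp add: inv_pg winv_rep)
    qed
  qed
  show ?case using IH piece x by (simp add: mult_pg)
qed

lemma deltaI_pow: "t > 1 \<Longrightarrow> vt P' t xs \<Longrightarrow> deltaI t xs = (delta t ^^ (t - 1)) xs"
proof -
  assume t: "t > 1" and v: "vt P' t xs"
  have "delta t ((delta t ^^ (t - 1)) xs) = (delta t ^^ t) xs"
  proof -
    obtain k where k: "t = Suc k" using t by (cases t) auto
    show ?thesis using k by simp
  qed
  also have "\<dots> = xs" using delta_pow_t[OF t v] .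
  finally have e: "delta t ((delta t ^^ (t - 1)) xs) = xs" .
  have "vt P' t ((delta t ^^ (t - 1)) xs)" using funpow_V[of "vt P' t" "delta t"] delta_v[OF t] v by blast
  then have "deltaI t (delta t ((delta t ^^ (t - 1)) xs)) = (delta t ^^ (t - 1)) xs" using deltaI_delta[OF t] by blast
  then show ?thesis using e by simp
qed

lemma Hact:
  assumes t: "t > 1" and h: "h \<in> HH"
  shows "\<forall>w\<in>h. \<forall>xs. vt P t xs \<longrightarrow> (\<exists>j. ev x0 P Q t w (xs, 0) = ((delta t ^^ j) xs, 0))"
proof -
  interpret T: actr x0 P Q t m n
    using P1 Q1 t xy by (unfold_locales) auto
  have SV0: "T.SV (xs, 0) \<longleftrightarrow> vt P t xs" for xs using Q1 by (simp add: T.SV_def)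
  show ?thesis using h
  proof (induction rule: generate.induct)
    case one
    show ?case
    proof (intro ballI allI impI)
      fix w xs assume w: "w \<in> \<one>\<^bsub>G1\<^esub>" and v: "vt P t xs"
      have "T.E w (xs, 0) = T.E [] (xs, 0)" using T.E_class[of w "[]"] w v SV0 by (simp add: one_pg)
      then show "\<exists>j. T.E w (xs, 0) = ((delta t ^^ j) xs, 0)" by (intro exI[of _ 0]) simp
    qed
  next
    case (incl h)
    show ?case
    proof (intro ballI allI impI)
      fix w xs assume w: "w \<in> h" and v: "vt P t xs"
      show "\<exists>j. T.E w (xs, 0) = ((delta t ^^ j) xs, 0)"
      proof (cases "h = aa [^]\<^bsub>G1\<^esub> P")
        case True
        then have "T.E w (xs, 0) = T.E (replicate P (x0, False)) (xs, 0)"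
          using T.E_class w v SV0 by (simp add: aaP)
        also have "\<dots> = (xs, 0)" using T.alpha_id v SV0 by (simp add: ev_rep del: act.simps)
        finally show ?thesis by (intro exI[of _ 0]) simp
      next
        case False
        then have "h = dd" using incl by simp
        then have "T.E w (xs, 0) = T.E (replicate Q (y0, False)) (xs, 0)"
          using T.E_class w v SV0 by (simp add: ddQ)
        also have "\<dots> = (delta t xs, 0)" using T.Bf_pow_Q[of 0 xs] Q1
          by (simp add: ev_rep T.actB[OF yx] del: act.simps)
        finally show ?thesis by (intro exI[of _ 1]) simp
      qed
    qed
  next
    case (inv h)
    show ?case
    proof (intro ballI allI impI)
      fix w xs assume w: "w \<in> inv\<^bsub>G1\<^esub> h" and v: "vt P t xs"
      show "\<exists>j. T.E w (xs, 0) = ((delta t ^^ j) xs, 0)"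
      proof (cases "h = aa [^]\<^bsub>G1\<^esub> P")
        case True
        then have "T.E w (xs, 0) = T.E (replicate P (x0, True)) (xs, 0)"
          using T.E_class w v SV0 by (simp add: aaP inv_pg winv_rep)
        also have "\<dots> = (xs, 0)" using T.alphaI_id v SV0 by (simp add: ev_rep del: act.simps)
        finally show ?thesis by (intro exI[of _ 0]) simp
      next
        case False
        then have "h = dd" using inv by simp
        then have "T.E w (xs, 0) = T.E (replicate Q (y0, True)) (xs, 0)"
          using T.E_class w v SV0 by (simp add: ddQ inv_pg winv_rep)
        also have "\<dots> = (deltaI t xs, 0)" using T.BI_pow_Q[of xs]
          by (simp add: ev_rep T.actBI[OF yx] del: act.simps)
        also have "\<dots> = ((delta t ^^ (t - 1)) xs, 0)" using deltaI_pow[OF t v] by simp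
        finally show ?thesis by blast
      qed
    qed
  next
    case (eng h1 h2)
    show ?case
    proof (intro ballI allI impI)
      fix w xs assume w: "w \<in> h1 \<otimes>\<^bsub>G1\<^esub> h2" and v: "vt P t xs"
      have c: "h1 \<in> carrier G1" "h2 \<in> carrier G1"
        using eng.hyps HH_c by auto
      obtain w1 w2 where w12: "h1 = word_class R1 w1" "h2 = word_class R1 w2"
        using c class_of_carrier by metis
      have m1': "w1 \<in> h1" "w2 \<in> h2" using w12 by (simp_all add: mem_class pres_eq.refl)
      obtain j2 where j2: "T.E w2 (xs, 0) = ((delta t ^^ j2) xs, 0)" using eng.IH(2) m1'(2) v by blast
      have v2: "vt P t ((delta t ^^ j2) xs)" using funpow_V[of "vt P t" "delta t"] delta_v[OF t] v by blast
      obtain j1 where j1: "T.E w1 ((delta t ^^ j2) xs, 0) = ((delta t ^^ j1) ((delta t ^^ j2) xs), 0)"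
        using eng.IH(1) m1'(1) v2 by blast
      have "T.E w (xs, 0) = T.E (w1 @ w2) (xs, 0)"
        using T.E_class[of w "w1 @ w2"] w w12 v SV0 by (simp add: mult_pg)
      also have "\<dots> = ((delta t ^^ (j1 + j2)) xs, 0)" using j1 j2 by (simp add: funpow_add)
      finally show "\<exists>j. T.E w (xs, 0) = ((delta t ^^ j) xs, 0)" by blast
    qed
  qed
qed


lemma set_core: "set (core u) \<subseteq> set u"
proof (cases u)
  case (Cons x r)
  obtain b e where "x = (b, e)" by (cases x)
  then show ?thesis using Cons by (cases b) auto
qed simp

lemma main:
  assumes f: "f \<in> generate G1 (insert aa HH)" and g: "g \<in> generate G1 (insert aa HH)"
    and notin: "f \<notin> HH <#>\<^bsub>G1\<^esub> {g} <#>\<^bsub>G1\<^esub> HH"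
  shows "\<exists>t0::nat. t0 > 1 \<and> (\<forall>t::nat. t > 0 \<and> t0 dvd t \<longrightarrow>
           rho m n t f \<notin> (rho m n t ` HH) <#>\<^bsub>presented_group (Rt m n t)\<^esub> {rho m n t g}
                <#>\<^bsub>presented_group (Rt m n t)\<^esub> (rho m n t ` HH))"
proof -
  interpret N: nf G1 aa dd P by (rule nf_inst)
  obtain u h where u: "vldP P (\<lambda>j. j \<noteq> 0) u" "h \<in> HH" "f = wh G1 aa dd u \<otimes>\<^bsub>G1\<^esub> h"
    using N.NF[OF f] by blast
  obtain v h' where v: "vldP P (\<lambda>j. j \<noteq> 0) v" "h' \<in> HH" "g = wh G1 aa dd v \<otimes>\<^bsub>G1\<^esub> h'"
    using N.NF[OF g] by blast
  have ncore: "core u \<noteq> core v" using N.dcoset[OF u(3) v(3) u(2) v(2)] notin by blast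
  define M where "M = Max (insert 0 ((\<lambda>x. \<bar>snd x\<bar>) ` set (u @ v)))"
  have M0: "0 \<le> M" unfolding M_def by (simp add: Max_ge_iff)
  have bu: "\<forall>x\<in>set u. \<bar>snd x\<bar> \<le> M" and bv: "\<forall>x\<in>set v. \<bar>snd x\<bar> \<le> M"
    unfolding M_def by (auto intro!: Max_ge)
  define t0 where "t0 = nat (2 * M + 2)"
  have t01: "t0 > 1" using M0 t0_def by simp
  show ?thesis
  proof (intro exI[of _ t0] conjI allI impI t01)
    fix t :: nat assume tt: "t > 0 \<and> t0 dvd t"
    then have "t0 \<le> t" by (simp add: dvd_imp_le)
    then have tM: "2 * M + 2 \<le> int t" using t0_def M0 by simp
    then have t1: "t > 1" using M0 by simp
    interpret T: actr x0 P Q t m n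
      using P1 Q1 t1 xy by (unfold_locales) auto
    let ?Gt = "presented_group (Rt m n t)"
    have SV0: "T.SV (xs, 0) \<longleftrightarrow> vt P t xs" for xs using Q1 by (simp add: T.SV_def)
    have btu: "\<forall>x\<in>set u. \<bar>snd x\<bar> < int t" using bu tM by fastforce
    have btv: "\<forall>x\<in>set v. \<bar>snd x\<bar> < int t" using bv tM by fastforce
    have fc: "f \<in> carrier G1" "g \<in> carrier G1"
      using f g group.generate_incl[OF grp, of "insert aa HH"] HH_c aa_c by auto
    have act_el: "T.E wf ([], 0) = (red t w, 0)"
      if pr: "wf \<in> F" "F = wh G1 aa dd w \<otimes>\<^bsub>G1\<^esub> k" "k \<in> HH" "vldP P (\<lambda>j. j \<noteq> 0) w" "\<forall>x\<in>set w. \<bar>snd x\<bar> < int t"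
      for wf F k w
    proof -
      obtain wk where wk: "k = word_class R1 wk" using pr(3) HH_c class_of_carrier by blast
      have "F = word_class R1 (WW x0 y0 Q w @ wk)" using pr(2,4) wk W_class by (simp add: mult_pg)
      then have "T.E wf ([], 0) = T.E (WW x0 y0 Q w @ wk) ([], 0)"
        using T.E_class pr(1) SV0 by simp
      also have "T.E wk ([], 0) = ([], 0)"
      proof -
        have "wk \<in> k" using wk by (simp add: mem_class pres_eq.refl)
        moreover have "vt P t []" by simp
        ultimately obtain j where "T.E wk ([], 0) = ((delta t ^^ j) [], 0)" using Hact[OF t1 pr(3)] by blast
        then show ?thesis by (simp add: delta_pow_Nil)
      qed
      then have "T.E (WW x0 y0 Q w @ wk) ([], 0) = T.E (WW x0 y0 Q w) ([], 0)" by simp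
      also have "\<dots> = (red t w, 0)" using T.ev_WW[OF yx pr(4,5)] .
      finally show ?thesis .
    qed
    show "rho m n t f \<notin> (rho m n t ` HH) <#>\<^bsub>?Gt\<^esub> {rho m n t g} <#>\<^bsub>?Gt\<^esub> (rho m n t ` HH)"
    proof
      assume "rho m n t f \<in> (rho m n t ` HH) <#>\<^bsub>?Gt\<^esub> {rho m n t g} <#>\<^bsub>?Gt\<^esub> (rho m n t ` HH)"
      then obtain h1 h2 where hh: "h1 \<in> HH" "h2 \<in> HH"
        "rho m n t f = rho m n t h1 \<otimes>\<^bsub>?Gt\<^esub> rho m n t g \<otimes>\<^bsub>?Gt\<^esub> rho m n t h2"
        unfolding set_mult_def by blast
      have hc: "h1 \<in> carrier G1" "h2 \<in> carrier G1" using hh(1,2) HH_c by blast+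
      obtain wf where wf: "f = word_class R1 wf" using class_of_carrier[OF fc(1)] by blast
      obtain wg where wg: "g = word_class R1 wg" using class_of_carrier[OF fc(2)] by blast
      obtain w1 where w1: "h1 = word_class R1 w1" using class_of_carrier[OF hc(1)] by blast
      obtain w2 where w2: "h2 = word_class R1 w2" using class_of_carrier[OF hc(2)] by blast
      note ws = wf wg w1 w2
      have "word_class (Rt m n t) wf = word_class (Rt m n t) (w1 @ wg @ w2)"
        using hh(3) ws by (simp add: rho_class mult_pg)
      then have pe: "pres_eq (Rt m n t) wf (w1 @ wg @ w2)" by (simp add: class_eq_iff)
      have s0: "T.SV ([], 0)" using SV0 by simp
      have Ef: "T.E wf ([], 0) = (red t u, 0)"
        using act_el[where wf=wf and F=f and k=h and w=u] ws u btu by (simp add: mem_class pres_eq.refl)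
      have Eg: "T.E wg ([], 0) = (red t v, 0)"
        using act_el[where wf=wg and F=g and k=h' and w=v] ws v btv by (simp add: mem_class pres_eq.refl)
      have E2: "T.E w2 ([], 0) = ([], 0)"
      proof -
        have "w2 \<in> h2" using ws by (simp add: mem_class pres_eq.refl)
        moreover have "vt P t []" by simp
        ultimately obtain j where "T.E w2 ([], 0) = ((delta t ^^ j) [], 0)" using Hact[OF t1 hh(2)] by blast
        then show ?thesis by (simp add: delta_pow_Nil)
      qed
      have vv: "vt P t (red t v)" using vt_red[OF v(1) btv] t1 by simp
      have "w1 \<in> h1" using ws by (simp add: mem_class pres_eq.refl)
      then obtain j where E1: "T.E w1 (red t v, 0) = ((delta t ^^ j) (red t v), 0)"
        using Hact[OF t1 hh(1)] vv by blast
      have "(red t u, 0) = ((delta t ^^ j) (red t v), 0)"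
        using T.respect[OF pe s0] Ef Eg E1 E2 by simp
      then have "core (red t u) = core (red t v)" using core_delta_pow[OF t1 vv, of j] by simp
      then have "red t (core u) = red t (core v)" by (simp add: core_red)
      moreover have "\<forall>x\<in>set (core u). \<bar>snd x\<bar> \<le> M" "\<forall>x\<in>set (core v). \<bar>snd x\<bar> \<le> M"
        using bu bv set_core by blast+
      moreover have "2 * M < int t" using tM by simp
      ultimately have "core u = core v" using red_inj by blast
      then show False using ncore by simp
    qed
  qed
qed

end



theorem proposition2p6:
  fixes m n :: nat and f g :: "word set"
  assumes "m > 1" and "n > 1"
    and "(f \<in> Asub m n \<and> g \<in> Asub m n) \<or> (f \<in> Bsub m n \<and> g \<in> Bsub m n)"
    and "f \<notin> Hsub m n <#>\<^bsub>Gmn m n\<^esub> {g} <#>\<^bsub>Gmn m n\<^esub> Hsub m n"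
  shows "\<exists>t0::nat. t0 > 1 \<and> (\<forall>t::nat. t > 0 \<and> t0 dvd t \<longrightarrow>
           rho m n t f \<notin> Ht m n t <#>\<^bsub>Gmnt m n t\<^esub> {rho m n t g} <#>\<^bsub>Gmnt m n t\<^esub> Ht m n t)"
proof -
  have Gt: "Gmnt m n t = presented_group (Rt m n t)" for t by (simp add: Gmnt_def)
  show ?thesis
  proof (cases "f \<in> Asub m n \<and> g \<in> Asub m n")
    case True
    interpret L: mainloc Ga Gb m n m n using assms(1,2) by unfold_locales auto
    have HH: "Hsub m n = L.HH"
      by (simp add: Hsub_def c_el_def d_el_def a_el_def b_el_def Gmn_def)
    have AA: "Asub m n = generate L.G1 (insert L.aa L.HH)"
      by (simp add: Asub_def HH[symmetric]) (simp add: a_el_def Gmn_def)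
    have "\<exists>t0::nat. t0 > 1 \<and> (\<forall>t::nat. t > 0 \<and> t0 dvd t \<longrightarrow>
           rho m n t f \<notin> (rho m n t ` L.HH) <#>\<^bsub>presented_group (Rt m n t)\<^esub> {rho m n t g}
                <#>\<^bsub>presented_group (Rt m n t)\<^esub> (rho m n t ` L.HH))"
      using L.main True assms(4) AA HH by (simp add: Gmn_def)
    then show ?thesis by (simp add: Ht_def HH Gt)
  next
    case False
    then have fg: "f \<in> Bsub m n \<and> g \<in> Bsub m n" using assms(3) by blast
    interpret L: mainloc Gb Ga m n n m using assms(1,2) by unfold_locales auto
    have HH: "Hsub m n = L.HH"
      by (simp add: Hsub_def c_el_def d_el_def a_el_def b_el_def Gmn_def insert_commute)
    have BB: "Bsub m n = generate L.G1 (insert L.aa L.HH)"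
      by (simp add: Bsub_def HH[symmetric]) (simp add: b_el_def Gmn_def)
    have "\<exists>t0::nat. t0 > 1 \<and> (\<forall>t::nat. t > 0 \<and> t0 dvd t \<longrightarrow>
           rho m n t f \<notin> (rho m n t ` L.HH) <#>\<^bsub>presented_group (Rt m n t)\<^esub> {rho m n t g}
                <#>\<^bsub>presented_group (Rt m n t)\<^esub> (rho m n t ` L.HH))"
      using L.main fg assms(4) BB HH by (simp add: Gmn_def)
    then show ?thesis by (simp add: Ht_def HH Gt)
  qed
qed


end
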